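(* Let $d\ge2$, $n\ge1$, $N=nd$, $F\in[0,1)$ with $F\ne 2^{-N}$, and $c=F-\frac{1-F}{2^N-1}$. Let $\rho_0$ be the $N$-qubit depolarized GHZ state with fidelity $F$, $\rho_x=U(x)\rho_0U(x)^\dagger$, and for $\alpha\in\mathbb{R}$ let $M(\alpha)=O(\alpha)^{\otimes N}$ with $O(\alpha)=e^{i\alpha}|1\rangle\langle0|+e^{-i\alpha}|0\rangle\langle1|$. Define the error-propagation variance at $x=0$, $$V(\alpha)=\frac{\langle M(\alpha)^2\rangle-\langle M(\alpha)\rangle^2}{\big|v_1\cdot\nabla_x\langle M(\alpha)\rangle\big|^2}\Bigg|_{x=0},\qquad \langle A\rangle=\mathrm{Tr}(\rho_xA),\ v_1=\tfrac{1}{\sqrt d}(1,\dots,1)^T,$$ for those $\alpha$ where the denominator is nonzero. Then the denominator is nonzero exactly when $\sin(nd\alpha)\neq0$, in which case $$V(\alpha)=\frac{1-c^2\cos^2(nd\alpha)}{d\,n^2c^2\sin^2(nd\alpha)};$$ $V$ attains its minimum exactly at $\alpha=\frac{(2l+1)\pi}{2nd}$, $l\in\mathbb{Z}$, with minimum value $\frac{1}{d\,c^2\,n^2}$. Moreover, for every $F\in[0,1]$, $d\,c^2>1$ if and only if $$F>\frac{2^{nd}+\sqrt d-1}{2^{nd}\sqrt d}.$$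
   Context: Setting: $d$ nodes with $n$ qubits each, qubits labelled $(i,k)$; $U(x)=\exp[-i\sum_{i=0}^{d-1}x_iH_i]$ with $H_i=\frac12\sum_{k=0}^{n-1}\sigma_z^{(i,k)}$, $x\in\mathbb{R}^d$. The $N$-qubit depolarized GHZ state with fidelity $F$ is $F|\mathrm{GHZ}_N\rangle\langle\mathrm{GHZ}_N|+\frac{1-F}{2^N-1}(I-|\mathrm{GHZ}_N\rangle\langle\mathrm{GHZ}_N|)$, $|\mathrm{GHZ}_N\rangle=(|0\cdots0\rangle+|1\cdots1\rangle)/\sqrt2$. The parameter of interest is $\theta_1=v_1^Tx$; the directional derivative $v_1\cdot\nabla_x$ is the derivative with respect to $\theta_1$ at fixed values of the orthogonal complementary parameters. The value $1/(n^2)$ per sample is the variance of the optimal local (non-networked) strategy, so $dc^2>1$ means advantage over it. *)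

theory Defs
  imports "HOL-Analysis.Analysis"
begin

text \<open>Operators on N qubits are complex matrices indexed by computational basis
states, represented as boolean lists of length N (False = |0>, True = |1>).
Qubit (i,k) of the paper (node i, local qubit k) sits at list position i*n+k.\<close>

type_synonym cmat = "bool list \<Rightarrow> bool list \<Rightarrow> complex"

definition bits :: "nat \<Rightarrow> bool list set" where
  "bits N = {xs. length xs = N}"

definition mmul :: "nat \<Rightarrow> cmat \<Rightarrow> cmat \<Rightarrow> cmat" where
  "mmul N A B = (\<lambda>a b. \<Sum>c\<in>bits N. A a c * B c b)"

definition idm :: cmat where
  "idm = (\<lambda>a b. if a = b then 1 else 0)"

fun mpow :: "nat \<Rightarrow> cmat \<Rightarrow> nat \<Rightarrow> cmat" where
  "mpow N A 0 = idm"
| "mpow N A (Suc k) = mmul N A (mpow N A k)"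

definition mexp :: "nat \<Rightarrow> cmat \<Rightarrow> cmat" where
  "mexp N A = (\<lambda>a b. \<Sum>k. mpow N A k a b / of_nat (fact k))"

definition adj :: "cmat \<Rightarrow> cmat" where
  "adj A = (\<lambda>a b. cnj (A b a))"

definition mtrace :: "nat \<Rightarrow> cmat \<Rightarrow> complex" where
  "mtrace N A = (\<Sum>a\<in>bits N. A a a)"

definition sigma_z :: "bool \<Rightarrow> bool \<Rightarrow> complex" where
  "sigma_z a b = (if a = b then (if a then -1 else 1) else 0)"

definition Oop :: "real \<Rightarrow> bool \<Rightarrow> bool \<Rightarrow> complex" where
  "Oop \<alpha> a b = (if a \<and> \<not> b then exp (\<i> * of_real \<alpha>)
                else if \<not> a \<and> b then exp (- \<i> * of_real \<alpha>) else 0)"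

definition local_op :: "nat \<Rightarrow> nat \<Rightarrow> (bool \<Rightarrow> bool \<Rightarrow> complex) \<Rightarrow> cmat" where
  "local_op N q A = (\<lambda>a b. A (a ! q) (b ! q) *
       (\<Prod>k\<in>{0..<N} - {q}. if a ! k = b ! k then 1 else 0))"

definition tensor_pow :: "nat \<Rightarrow> (bool \<Rightarrow> bool \<Rightarrow> complex) \<Rightarrow> cmat" where
  "tensor_pow N A = (\<lambda>a b. \<Prod>k<N. A (a ! k) (b ! k))"

definition Ham :: "nat \<Rightarrow> nat \<Rightarrow> nat \<Rightarrow> cmat" where
  "Ham d n i = (\<lambda>a b. (1/2) * (\<Sum>k<n. local_op (n*d) (i*n+k) sigma_z a b))"

text \<open>U(x) = exp(-i sum_i x_i H_i), x in R^d given as nat => real (indices < d).\<close>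
definition Uop :: "nat \<Rightarrow> nat \<Rightarrow> (nat \<Rightarrow> real) \<Rightarrow> cmat" where
  "Uop d n x = mexp (n*d) (\<lambda>a b. - \<i> * (\<Sum>i<d. of_real (x i) * Ham d n i a b))"

definition ghz :: "nat \<Rightarrow> bool list \<Rightarrow> complex" where
  "ghz N a = (if a = replicate N False \<or> a = replicate N True
              then complex_of_real (1 / sqrt 2) else 0)"

definition ghz_proj :: "nat \<Rightarrow> cmat" where
  "ghz_proj N = (\<lambda>a b. ghz N a * cnj (ghz N b))"

definition rho0 :: "nat \<Rightarrow> real \<Rightarrow> cmat" where
  "rho0 N F = (\<lambda>a b. of_real F * ghz_proj N a b
      + of_real ((1 - F) / (2 ^ N - 1)) * (idm a b - ghz_proj N a b))"

definition rhox :: "nat \<Rightarrow> nat \<Rightarrow> real \<Rightarrow> (nat \<Rightarrow> real) \<Rightarrow> cmat" where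
  "rhox d n F x = mmul (n*d) (mmul (n*d) (Uop d n x) (rho0 (n*d) F)) (adj (Uop d n x))"

definition Mop :: "nat \<Rightarrow> real \<Rightarrow> cmat" where
  "Mop N \<alpha> = tensor_pow N (Oop \<alpha>)"

definition expect :: "nat \<Rightarrow> nat \<Rightarrow> real \<Rightarrow> (nat \<Rightarrow> real) \<Rightarrow> cmat \<Rightarrow> complex" where
  "expect d n F x A = mtrace (n*d) (mmul (n*d) (rhox d n F x) A)"

definition v1 :: "nat \<Rightarrow> nat \<Rightarrow> real" where
  "v1 d = (\<lambda>i. 1 / sqrt (real d))"

text \<open>v1 . grad_x <M(alpha)> at x = 0, as the directional derivative along v1.\<close>
definition denom_deriv :: "nat \<Rightarrow> nat \<Rightarrow> real \<Rightarrow> real \<Rightarrow> complex" where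
  "denom_deriv d n F \<alpha> =
     vector_derivative (\<lambda>t::real. expect d n F (\<lambda>i. t * v1 d i) (Mop (n*d) \<alpha>)) (at 0)"

definition Verr :: "nat \<Rightarrow> nat \<Rightarrow> real \<Rightarrow> real \<Rightarrow> complex" where
  "Verr d n F \<alpha> =
     (expect d n F (\<lambda>i. 0) (mmul (n*d) (Mop (n*d) \<alpha>) (Mop (n*d) \<alpha>))
      - (expect d n F (\<lambda>i. 0) (Mop (n*d) \<alpha>))\<^sup>2)
     / complex_of_real ((cmod (denom_deriv d n F \<alpha>))\<^sup>2)"

definition cfid :: "nat \<Rightarrow> real \<Rightarrow> real" where
  "cfid N F = F - (1 - F) / (2 ^ N - 1)"

end

theory Submission
  imports Defs
begin


lemma bits_finite[simp]: "finite (bits N)"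
  unfolding bits_def using finite_lists_length_eq[of "UNIV::bool set" N] by simp

lemma bits_card: "card (bits N) = 2 ^ N"
  unfolding bits_def using card_lists_length_eq[of "UNIV::bool set" N] by simp

lemma bits_mem[simp]: "a \<in> bits N \<longleftrightarrow> length a = N"
  by (simp add: bits_def)

lemma diff_idx: "length a = N \<Longrightarrow> length b = N \<Longrightarrow> a \<noteq> b \<Longrightarrow> \<exists>k<N. a ! k \<noteq> b ! k"
proof (rule ccontr)
  assume "length a = N" "length b = N" "a \<noteq> b" "\<not> (\<exists>k<N. a ! k \<noteq> b ! k)"
  then have "a = b" by (intro nth_equalityI) auto
  then show False using \<open>a \<noteq> b\<close> by simp
qed

lemma local_op_offdiag:
  assumes "length a = N" "length b = N" "a \<noteq> b" "\<And>u v. u \<noteq> v \<Longrightarrow> A u v = 0"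
  shows "local_op N q A a b = 0"
proof -
  obtain k where k: "k < N" "a ! k \<noteq> b ! k" using diff_idx[OF assms(1,2,3)] by auto
  show ?thesis
  proof (cases "k = q")
    case True then show ?thesis using k assms(4) by (simp add: local_op_def)
  next
    case False
    then have "k \<in> {0..<N} - {q}" using k by auto
    then have "(\<Prod>k\<in>{0..<N} - {q}. if a ! k = b ! k then 1 else 0) = (0::complex)"
      using k by (intro prod_zero) auto
    then show ?thesis by (simp add: local_op_def)
  qed
qed

lemma local_op_diag: "local_op N q A a a = A (a ! q) (a ! q)"
  by (simp add: local_op_def)

lemma sigma_z_offdiag: "u \<noteq> v \<Longrightarrow> sigma_z u v = 0" by (simp add: sigma_z_def)

definition gen :: "nat \<Rightarrow> nat \<Rightarrow> (nat \<Rightarrow> real) \<Rightarrow> cmat" where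
  "gen d n x = (\<lambda>a b. - \<i> * (\<Sum>i<d. of_real (x i) * Ham d n i a b))"

lemma gen_offdiag: "length a = n*d \<Longrightarrow> length b = n*d \<Longrightarrow> a \<noteq> b \<Longrightarrow> gen d n x a b = 0"
  unfolding gen_def Ham_def using local_op_offdiag[OF _ _ _ sigma_z_offdiag] by simp

lemma mpow_diag:
  assumes "\<And>a b. length a = N \<Longrightarrow> length b = N \<Longrightarrow> a \<noteq> b \<Longrightarrow> A a b = 0"
  shows "length a = N \<Longrightarrow> length b = N \<Longrightarrow> mpow N A k a b = (if a = b then A a a ^ k else 0)"
proof (induction k arbitrary: a b)
  case 0 then show ?case by (simp add: idm_def)
next
  case (Suc k)
  have "mpow N A (Suc k) a b = (\<Sum>c\<in>bits N. A a c * (if c = b then A c c ^ k else 0))"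
    using Suc by (simp add: mmul_def)
  also have "\<dots> = (\<Sum>c\<in>bits N. if c = b then A a b * A b b ^ k else 0)"
    by (intro sum.cong) auto
  also have "\<dots> = A a b * A b b ^ k" using Suc.prems by simp
  finally show ?case using assms Suc.prems by auto
qed

lemma exp_series_c: "(\<lambda>k. z ^ k / of_nat (fact k)) sums exp (z::complex)"
proof -
  have "(\<lambda>k. z ^ k /\<^sub>R fact k) sums exp z" by (rule exp_converges)
  moreover have "\<And>k. z ^ k /\<^sub>R fact k = z ^ k / of_nat (fact k)"
    by (simp add: scaleR_conv_of_real divide_inverse_commute of_real_inverse[symmetric])
  ultimately show ?thesis by simp
qed

lemma mexp_diag:
  assumes "\<And>a b. length a = N \<Longrightarrow> length b = N \<Longrightarrow> a \<noteq> b \<Longrightarrow> A a b = 0"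
  and "length a = N" "length b = N"
  shows "mexp N A a b = (if a = b then exp (A a a) else 0)"
proof -
  have "\<And>k. mpow N A k a b = (if a = b then A a a ^ k else 0)"
    using mpow_diag[of N A, OF assms(1)] assms(2,3) by blast
  then show ?thesis using exp_series_c[of "A a a", THEN sums_unique]
    by (auto simp add: mexp_def)
qed



lemma conj_diag:
  assumes U: "\<And>a b. length a = N \<Longrightarrow> length b = N \<Longrightarrow> U a b = (if a = b then ud a else 0)"
  and "length a = N" "length b = N"
  shows "mmul N (mmul N U R) (adj U) a b = ud a * R a b * cnj (ud b)"
proof -
  have 1: "mmul N U R a e = ud a * R a e" if "length e = N" for e
  proof -
    have "mmul N U R a e = (\<Sum>c\<in>bits N. if c = a then ud a * R a e else 0)"
      unfolding mmul_def using U assms(2) by (intro sum.cong) auto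
    then show ?thesis using assms(2) by simp
  qed
  have "mmul N (mmul N U R) (adj U) a b = (\<Sum>c\<in>bits N. if c = b then ud a * R a b * cnj (ud b) else 0)"
    unfolding mmul_def[of N "mmul N U R"] adj_def
  proof (intro sum.cong refl)
    fix c assume c: "c \<in> bits N"
    then have "U b c = (if b = c then ud b else 0)" using U assms(3) by simp
    then show "mmul N U R a c * cnj (U b c) = (if c = b then ud a * R a b * cnj (ud b) else 0)"
      using 1 c by auto
  qed
  then show ?thesis using assms(3) by simp
qed

definition uu :: "nat \<Rightarrow> nat \<Rightarrow> (nat \<Rightarrow> real) \<Rightarrow> bool list \<Rightarrow> complex" where
  "uu d n x a = exp (gen d n x a a)"

lemma Uop_diag: "length a = n*d \<Longrightarrow> length b = n*d \<Longrightarrow>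
   Uop d n x a b = (if a = b then uu d n x a else 0)"
  unfolding Uop_def uu_def gen_def[symmetric]
  by (rule mexp_diag) (auto intro: gen_offdiag)

lemma rhox_entry: "length a = n*d \<Longrightarrow> length b = n*d \<Longrightarrow>
   rhox d n F x a b = uu d n x a * rho0 (n*d) F a b * cnj (uu d n x b)"
  unfolding rhox_def by (rule conj_diag[OF Uop_diag])

lemma Mop_entry:
  assumes "length a = N" "length b = N"
  shows "Mop N \<alpha> a b = (if b = map Not a then (\<Prod>k<N. Oop \<alpha> (a!k) (\<not> a!k)) else 0)"
proof (cases "b = map Not a")
  case True then show ?thesis using assms by (simp add: Mop_def tensor_pow_def)
next
  case False
  have "\<exists>k<N. b ! k \<noteq> map Not a ! k" using assms False by (intro diff_idx) auto
  then obtain k where k: "k < N" "b ! k \<noteq> map Not a ! k" by blast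
  then have k: "k < N" "b ! k \<noteq> (\<not> a ! k)" using assms by auto
  then have z: "Oop \<alpha> (a!k) (b!k) = 0" by (auto simp: Oop_def)
  have "(\<Prod>k<N. Oop \<alpha> (a!k) (b!k)) = 0" using k(1) z by (metis finite_lessThan lessThan_iff prod_zero)
  then show ?thesis using False by (simp add: Mop_def tensor_pow_def)
qed

lemma Mop_sq:
  assumes "length a = N" "length b = N"
  shows "mmul N (Mop N \<alpha>) (Mop N \<alpha>) a b = idm a b"
proof -
  have "mmul N (Mop N \<alpha>) (Mop N \<alpha>) a b =
     (\<Sum>c\<in>bits N. if c = map Not a then Mop N \<alpha> a (map Not a) * Mop N \<alpha> (map Not a) b else 0)"
    unfolding mmul_def using assms by (intro sum.cong) (auto simp: Mop_entry)
  also have "\<dots> = Mop N \<alpha> a (map Not a) * Mop N \<alpha> (map Not a) b" using assms by simp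
  also have "\<dots> = idm a b"
  proof (cases "a = b")
    case True
    have "(\<Prod>k<N. Oop \<alpha> (a!k) (\<not> a!k)) * (\<Prod>k<N. Oop \<alpha> (\<not> a!k) (a!k)) =
          (\<Prod>k<N. Oop \<alpha> (a!k) (\<not> a!k) * Oop \<alpha> (\<not> a!k) (a!k))"
      by (simp add: prod.distrib)
    also have "\<dots> = 1" by (intro prod.neutral) (auto simp: Oop_def exp_minus field_simps)
    finally show ?thesis using True assms by (simp add: Mop_entry idm_def comp_def)
  next
    case False
    then have "b \<noteq> map Not (map Not a)" by (simp add: comp_def)
    then show ?thesis using False assms by (simp add: Mop_entry idm_def comp_def)
  qed
  finally show ?thesis .
qed

lemma trace_Mop:
  assumes "\<And>a b. length a = N \<Longrightarrow> length b = N \<Longrightarrow> R a b = R' a b"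
  shows "mtrace N (mmul N R (Mop N \<alpha>)) = (\<Sum>a\<in>bits N. R' a (map Not a) * Mop N \<alpha> (map Not a) a)"
  unfolding mtrace_def
proof (intro sum.cong refl)
  fix a assume a: "a \<in> bits N"
  have "mmul N R (Mop N \<alpha>) a a = (\<Sum>c\<in>bits N. if c = map Not a then R' a (map Not a) * Mop N \<alpha> (map Not a) a else 0)"
    unfolding mmul_def
  proof (intro sum.cong refl)
    fix c assume c: "c \<in> bits N"
    have e: "(a = map Not c) = (c = map Not a)" by (auto simp: comp_def)
    show "R a c * Mop N \<alpha> c a = (if c = map Not a then R' a (map Not a) * Mop N \<alpha> (map Not a) a else 0)"
      using a c assms[of a c] Mop_entry[of c N a \<alpha>] unfolding e by auto
  qed
  then show "mmul N R (Mop N \<alpha>) a a = R' a (map Not a) * Mop N \<alpha> (map Not a) a" using a by simp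
qed

lemma trace_id:
  assumes "\<And>a b. length a = N \<Longrightarrow> length b = N \<Longrightarrow> B a b = idm a b"
  shows "mtrace N (mmul N R B) = (\<Sum>a\<in>bits N. R a a)"
  unfolding mtrace_def
proof (intro sum.cong refl)
  fix a assume a: "a \<in> bits N"
  have "mmul N R B a a = (\<Sum>c\<in>bits N. if c = a then R a a else 0)"
    unfolding mmul_def using a assms by (intro sum.cong) (auto simp: idm_def)
  then show "mmul N R B a a = R a a" using a by simp
qed



lemma idx_bound: "i < d \<Longrightarrow> k < n \<Longrightarrow> i*n+k < n*(d::nat)"
proof -
  assume "i < d" "k < n"
  then have "i*n + k < i*n + n" by simp
  also have "\<dots> = (i+1)*n" by simp
  also have "\<dots> \<le> d*n" using \<open>i<d\<close> by (intro mult_right_mono) auto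
  finally show ?thesis by (simp add: mult.commute)
qed

lemma Ham_rep: "i < d \<Longrightarrow> Ham d n i (replicate (n*d) b) (replicate (n*d) b) = (if b then - of_nat n / 2 else of_nat n / 2)"
  unfolding Ham_def local_op_diag using idx_bound[of i d _ n]
  by (simp add: sigma_z_def)

lemma gen_rep: "gen d n x (replicate (n*d) b) (replicate (n*d) b)
   = (if b then \<i> else - \<i>) * of_real ((\<Sum>i<d. x i) * n / 2)"
proof -
  have "gen d n x (replicate (n*d) b) (replicate (n*d) b) = - \<i> * (\<Sum>i<d. of_real (x i) * (if b then - of_nat n / 2 else of_nat n / 2))"
    unfolding gen_def by (simp add: Ham_rep)
  also have "\<dots> = (if b then \<i> else - \<i>) * of_real ((\<Sum>i<d. x i) * n / 2)"
  proof -
    have s: "\<And>c::complex. (\<Sum>i<d. of_real (x i) * c) = of_real (\<Sum>i<d. x i) * c"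
      by (simp add: sum_distrib_right)
    show ?thesis unfolding s by (cases b) (simp_all add: field_simps)
  qed
  finally show ?thesis .
qed



lemma final_alg: "exp(- \<i> * of_real t) * of_real (c/2) * cnj (exp (\<i> * of_real t)) * exp(\<i> * of_real \<alpha>) ^ N
   + exp(\<i> * of_real t) * of_real (c/2) * cnj (exp (- \<i> * of_real t)) * exp(- \<i> * of_real \<alpha>) ^ N
   = of_real (c * cos (real N * \<alpha> - 2 * t))"
proof -
  have e1: "exp (\<i> * of_real y) = cis y" for y by (simp add: cis_conv_exp)
  have e2: "exp (- \<i> * of_real y) = cis (- y)" for y by (simp add: cis_conv_exp)
  have "cis (- t) * of_real (c/2) * cnj (cis t) * cis \<alpha> ^ N + cis t * of_real (c/2) * cnj (cis (- t)) * cis (- \<alpha>) ^ N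
     = of_real (c/2) * (cis (real N * \<alpha> - 2 * t) + cis (- (real N * \<alpha> - 2 * t)))"
  proof -
    have c3: "cis a * cis b * cis e = cis g" if "a + b + e = g" for a b e g
      using that by (simp add: cis_mult)
    have p1: "cis (- t) * cis (- t) * cis (real N * \<alpha>) = cis (real N * \<alpha> - 2 * t)" by (rule c3) simp
    have p2: "cis t * cis t * cis (real N * (- \<alpha>)) = cis (- (real N * \<alpha> - 2 * t))" by (rule c3) simp
    have q1: "cis \<alpha> ^ N = cis (real N * \<alpha>)" by (rule Complex.DeMoivre)
    have q2: "cis (- \<alpha>) ^ N = cis (real N * (- \<alpha>))" by (rule Complex.DeMoivre)
    have "cis (- t) * of_real (c/2) * cnj (cis t) * cis \<alpha> ^ N + cis t * of_real (c/2) * cnj (cis (- t)) * cis (- \<alpha>) ^ N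
      = of_real (c/2) * (cis (- t) * cis (- t) * cis (real N * \<alpha>)) + of_real (c/2) * (cis t * cis t * cis (real N * (- \<alpha>)))"
      unfolding q1 q2 cis_cnj minus_minus by (simp only: ac_simps)
    then show ?thesis unfolding p1 p2 by (simp only: distrib_left)
  qed
  also have "\<dots> = of_real (c * cos (real N * \<alpha> - 2 * t))"
  proof -
    have "of_real (c/2) * (cis y + cis (-y)) = of_real (c * cos y)" for y
      by (simp add: complex_eq_iff)
    then show ?thesis .
  qed
  finally show ?thesis unfolding e1 e2 .
qed

lemma ne_map_Not: "length a \<ge> 1 \<Longrightarrow> a \<noteq> map Not a"
proof
  assume "length a \<ge> 1" "a = map Not a"
  then have "a ! 0 = map Not a ! 0" by simp
  also have "\<dots> = (\<not> a ! 0)" by (rule nth_map) (use \<open>length a \<ge> 1\<close> in auto)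
  finally show False by simp
qed

lemma ghz_zero: "a \<noteq> replicate N False \<Longrightarrow> a \<noteq> replicate N True \<Longrightarrow> ghz N a = 0"
  by (simp add: ghz_def)

lemma ghz_proj_zo: "ghz_proj N (replicate N b) (replicate N b') = of_real (1/2)"
proof -
  have "of_real (1 / sqrt 2) * of_real (1 / sqrt 2) = (of_real (1/2) :: complex)"
  proof -
    have "1 / sqrt 2 * (1 / sqrt 2) = (1/2::real)" by simp
    then show ?thesis by (metis of_real_mult)
  qed
  then show ?thesis by (simp add: ghz_proj_def ghz_def)
qed

lemma cfid_alt: "cfid N F = F - (1 - F) / (2 ^ N - 1)" by (simp add: cfid_def)

lemma rho0_zo: "N \<ge> 1 \<Longrightarrow> b' = (\<not> b) \<Longrightarrow> rho0 N F (replicate N b) (replicate N b') = of_real (cfid N F / 2)"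
proof -
  assume "N \<ge> 1" "b' = (\<not> b)"
  then have "replicate N b \<noteq> replicate N b'" by (cases N) auto
  have g: "\<And>Q::real. of_real F * of_real (1/2) + of_real Q * (0 - of_real (1/2)) = (of_real ((F - Q)/2) :: complex)"
    by (simp add: field_simps)
  show ?thesis unfolding rho0_def ghz_proj_zo cfid_def idm_def using \<open>replicate N b \<noteq> replicate N b'\<close>
    by (simp only: if_False g)
qed

lemma expect_M:
  assumes n: "n \<ge> 1" and d: "d \<ge> 1"
  shows "expect d n F x (Mop (n*d) \<alpha>) =
     of_real (cfid (n*d) F * cos (real (n*d) * \<alpha> - real n * (\<Sum>i<d. x i)))"
proof -
  define N where "N = n*d"
  have N1: "N \<ge> 1" using n d by (simp add: N_def)
  define z where "z = replicate N False"
  define on where "on = replicate N True"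
  have zo: "z \<noteq> on" using N1 by (cases N) (auto simp: z_def on_def)
  define R' where "R' = (\<lambda>a b. uu d n x a * rho0 N F a b * cnj (uu d n x b))"
  define f where "f = (\<lambda>a. R' a (map Not a) * Mop N \<alpha> (map Not a) a)"
  have "expect d n F x (Mop N \<alpha>) = sum f (bits N)"
    unfolding expect_def f_def N_def
    by (rule trace_Mop) (simp add: rhox_entry R'_def N_def)
  also have "\<dots> = sum f {z, on}"
  proof (rule sum.mono_neutral_right)
    show "{z, on} \<subseteq> bits N" by (simp add: z_def on_def)
    show "\<forall>a\<in>bits N - {z, on}. f a = 0"
    proof
      fix a assume a: "a \<in> bits N - {z, on}"
      then have "ghz N a = 0" by (intro ghz_zero) (auto simp: z_def on_def)
      moreover have "a \<noteq> map Not a" using a N1 by (intro ne_map_Not) auto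
      ultimately have "rho0 N F a (map Not a) = 0" by (simp add: rho0_def ghz_proj_def idm_def)
      then show "f a = 0" by (simp add: f_def R'_def)
    qed
  qed simp
  also have "\<dots> = f z + f on" using zo by simp
  also have "\<dots> = of_real (cfid N F * cos (real N * \<alpha> - real n * (\<Sum>i<d. x i)))"
  proof -
    define t where "t = (\<Sum>i<d. x i) * real n / 2"
    have mz: "map Not z = on" and mo: "map Not on = z" by (simp_all add: z_def on_def)
    have uz: "uu d n x z = exp (- \<i> * of_real t)" and uo: "uu d n x on = exp (\<i> * of_real t)"
      by (simp_all add: uu_def z_def on_def N_def gen_rep t_def)
    have Mz: "Mop N \<alpha> on z = exp (\<i> * of_real \<alpha>) ^ N" and Mo: "Mop N \<alpha> z on = exp (- \<i> * of_real \<alpha>) ^ N"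
      by (simp_all add: Mop_def tensor_pow_def z_def on_def Oop_def)
    have rz: "rho0 N F z on = of_real (cfid N F / 2)" and ro: "rho0 N F on z = of_real (cfid N F / 2)"
      using N1 by (simp_all add: z_def on_def rho0_zo)
    have "f z + f on = of_real (cfid N F * cos (real N * \<alpha> - 2 * t))"
      unfolding f_def R'_def mz mo uz uo Mz Mo rz ro by (rule final_alg)
    moreover have "2 * t = real n * (\<Sum>i<d. x i)" by (simp add: t_def)
    ultimately show ?thesis by simp
  qed
  moreover have "real n * (\<Sum>i<d. x i) = (\<Sum>i<d. x i) * real n" by (rule mult.commute)
  ultimately show ?thesis unfolding N_def by metis
qed



lemma sum_ghz: "N \<ge> 1 \<Longrightarrow> (\<Sum>a\<in>bits N. ghz_proj N a a) = 1"
proof -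
  assume N1: "N \<ge> 1"
  define z where "z = replicate N False"
  define on where "on = replicate N True"
  have zo: "z \<noteq> on" using N1 by (cases N) (auto simp: z_def on_def)
  have "(\<Sum>a\<in>bits N. ghz_proj N a a) = (\<Sum>a\<in>{z, on}. ghz_proj N a a)"
  proof (rule sum.mono_neutral_right)
    show "\<forall>a\<in>bits N - {z, on}. ghz_proj N a a = 0"
      by (auto simp: ghz_proj_def ghz_zero z_def on_def)
  qed (auto simp: z_def on_def)
  also have "\<dots> = 1" using zo unfolding z_def on_def by (simp add: ghz_proj_zo)
  finally show ?thesis .
qed

lemma expect_M2:
  assumes n: "n \<ge> 1" and d: "d \<ge> 1"
  shows "expect d n F (\<lambda>i. 0) (mmul (n*d) (Mop (n*d) \<alpha>) (Mop (n*d) \<alpha>)) = 1"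
proof -
  define N where "N = n*d"
  have N1: "N \<ge> 1" using n d by (simp add: N_def)
  define Q where "Q = (1 - F) / (2 ^ N - 1)"
  have "expect d n F (\<lambda>i. 0) (mmul N (Mop N \<alpha>) (Mop N \<alpha>)) = (\<Sum>a\<in>bits N. rhox d n F (\<lambda>i. 0) a a)"
    unfolding expect_def N_def by (rule trace_id) (rule Mop_sq)
  also have "\<dots> = (\<Sum>a\<in>bits N. rho0 N F a a)"
    by (intro sum.cong refl) (simp add: rhox_entry N_def uu_def gen_def)
  also have "\<dots> = (\<Sum>a\<in>bits N. of_real F * ghz_proj N a a + of_real Q * (1 - ghz_proj N a a))"
    by (intro sum.cong refl) (simp add: rho0_def idm_def Q_def)
  also have "\<dots> = of_real F * (\<Sum>a\<in>bits N. ghz_proj N a a) + of_real Q * (of_nat (card (bits N)) - (\<Sum>a\<in>bits N. ghz_proj N a a))"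
    by (simp add: sum.distrib sum_distrib_left sum_subtractf right_diff_distrib)
  also have "\<dots> = of_real (F + Q * (2 ^ N - 1))"
    unfolding sum_ghz[OF N1] bits_card by simp
  also have "\<dots> = 1"
  proof -
    have "(1::real) < 2 ^ N" by (rule one_less_power) (use N1 in auto)
    then show ?thesis by (simp add: Q_def)
  qed
  finally show ?thesis by (simp add: N_def)
qed

lemma cfid_ne0:
  assumes "N \<ge> 1" "F \<noteq> 1 / 2 ^ N"
  shows "cfid N F \<noteq> 0"
proof -
  have "(1::real) < 2 ^ N" by (rule one_less_power) (use assms(1) in auto)
  then have p: "(2::real) ^ N - 1 > 0" by simp
  have "cfid N F = (F * 2 ^ N - 1) / (2 ^ N - 1)"
    using p by (simp add: cfid_def field_simps)
  moreover have "F * 2 ^ N - 1 \<noteq> 0" using assms(2) by (auto simp: field_simps)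
  ultimately show ?thesis using p by simp
qed

lemma denom_formula:
  assumes n: "n \<ge> 1" and d: "d \<ge> 1"
  shows "denom_deriv d n F \<alpha> = of_real (cfid (n*d) F * (real n * sqrt (real d)) * sin (real (n*d) * \<alpha>))"
proof -
  define c where "c = cfid (n*d) F"
  have s: "(\<Sum>i<d. t * v1 d i) = t * sqrt (real d)" for t
  proof -
    have "(\<Sum>i<d. t * v1 d i) = real d * (t / sqrt (real d))" by (simp add: v1_def)
    also have "\<dots> = t * (real d / sqrt (real d))" by simp
    also have "\<dots> = t * sqrt (real d)" by (simp add: real_div_sqrt)
    finally show ?thesis .
  qed
  have h: "(\<lambda>t. expect d n F (\<lambda>i. t * v1 d i) (Mop (n*d) \<alpha>)) =
     (\<lambda>t. of_real (c * cos (real (n*d) * \<alpha> - real n * (t * sqrt (real d)))))"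
    by (rule ext) (simp only: expect_M[OF n d] s c_def)
  have "((\<lambda>t. c * cos (real (n*d) * \<alpha> - real n * (t * sqrt (real d)))) has_field_derivative
       c * (real n * sqrt (real d)) * sin (real (n*d) * \<alpha>)) (at 0)"
    by (auto intro!: derivative_eq_intros)
  then have "((\<lambda>t. expect d n F (\<lambda>i. t * v1 d i) (Mop (n*d) \<alpha>)) has_vector_derivative
       of_real (c * (real n * sqrt (real d)) * sin (real (n*d) * \<alpha>))) (at 0)"
    unfolding h by (rule has_vector_derivative_of_real)
  then show ?thesis unfolding denom_deriv_def c_def by (rule vector_derivative_at)
qed



lemma Verr_formula:
  assumes n: "n \<ge> 1" and d: "d \<ge> 1"
  shows "Verr d n F \<alpha> = of_real ((1 - (cfid (n*d) F)\<^sup>2 * (cos (real (n*d) * \<alpha>))\<^sup>2)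
             / (real d * (real n)\<^sup>2 * (cfid (n*d) F)\<^sup>2 * (sin (real (n*d) * \<alpha>))\<^sup>2))"
proof -
  define c where "c = cfid (n*d) F"
  define C where "C = cos (real (n*d) * \<alpha>)"
  define S where "S = sin (real (n*d) * \<alpha>)"
  have e0: "expect d n F (\<lambda>i. 0) (Mop (n*d) \<alpha>) = of_real (c * C)"
    using expect_M[OF n d, of F "\<lambda>i. 0" \<alpha>] by (simp add: c_def C_def)
  have dd: "denom_deriv d n F \<alpha> = of_real (c * (real n * sqrt (real d)) * S)"
    using denom_formula[OF n d] by (simp add: c_def S_def)
  have r: "(c * (real n * sqrt (real d)) * S)\<^sup>2 = real d * (real n)\<^sup>2 * c\<^sup>2 * S\<^sup>2"
    by (simp add: power_mult_distrib)
  have "Verr d n F \<alpha> = (1 - (of_real (c * C))\<^sup>2) / of_real ((cmod (of_real (c * (real n * sqrt (real d)) * S)))\<^sup>2)"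
    unfolding Verr_def expect_M2[OF n d] e0 dd ..
  also have "\<dots> = of_real ((1 - (c * C)\<^sup>2) / (c * (real n * sqrt (real d)) * S)\<^sup>2)"
    by (simp only: norm_of_real power2_abs of_real_power of_real_diff of_real_1 of_real_divide)
  also have "\<dots> = of_real ((1 - c\<^sup>2 * C\<^sup>2) / (real d * (real n)\<^sup>2 * c\<^sup>2 * S\<^sup>2))"
    unfolding r by (simp add: power_mult_distrib)
  finally show ?thesis by (simp add: c_def C_def S_def)
qed



lemma cfid_form: "N \<ge> 1 \<Longrightarrow> cfid N F = (F * 2 ^ N - 1) / (2 ^ N - 1)"
proof -
  assume "N \<ge> 1"
  have "(1::real) < 2 ^ N" by (rule one_less_power) (use \<open>N \<ge> 1\<close> in auto)
  then show ?thesis by (simp add: cfid_def field_simps)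
qed

lemma two_pow_ge4: "N \<ge> 2 \<Longrightarrow> (4::real) \<le> 2 ^ N"
proof -
  assume "N \<ge> 2"
  then have "(2::real) ^ 2 \<le> 2 ^ N" by (intro power_increasing) auto
  then show ?thesis by simp
qed

lemma cfid_sq_lt1:
  assumes "N \<ge> 2" "0 \<le> F" "F < 1"
  shows "(cfid N F)\<^sup>2 < 1"
proof -
  define P where "P = (2::real) ^ N"
  have P4: "P \<ge> 4" using two_pow_ge4[OF assms(1)] by (simp add: P_def)
  have c: "cfid N F = (F * P - 1) / (P - 1)" using cfid_form[of N F] assms(1) by (simp add: P_def)
  have "F * P < P" using assms P4 by simp
  then have lt: "(F * P - 1) / (P - 1) < 1" using P4 by (simp add: divide_less_eq)
  have "F * P \<ge> 0" using assms P4 by simp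
  then have gt: "(F * P - 1) / (P - 1) > -1" using P4 by (simp add: less_divide_eq)
  show ?thesis unfolding c abs_square_less_1 using lt gt by linarith
qed

lemma cos_odd_zero: "N > 0 \<Longrightarrow> cos (real N * ((2 * real_of_int l + 1) * pi / (2 * real N))) = 0"
proof -
  assume "N > 0"
  have "real N * ((2 * real_of_int l + 1) * pi / (2 * real N)) = of_int (2 * l + 1) * (pi / 2)"
    using \<open>N > 0\<close> by (simp add: field_simps)
  then show ?thesis unfolding cos_zero_iff_int by (intro exI[of _ "2 * l + 1"]) simp
qed

lemma cos_zero_form:
  assumes "N > 0" "cos (real N * \<alpha>) = 0"
  shows "\<exists>l::int. \<alpha> = (2 * real_of_int l + 1) * pi / (2 * real N)"
proof -
  obtain i where i: "odd i" "real N * \<alpha> = of_int i * (pi / 2)" using assms(2) cos_zero_iff_int by blast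
  obtain l where l: "i = 2 * l + 1" using i(1) by (metis oddE)
  have "\<alpha> = (2 * real_of_int l + 1) * pi / (2 * real N)"
    using i(2) assms(1) unfolding l by (simp add: field_simps)
  then show ?thesis by blast
qed

lemma W_decomp:
  fixes K s c :: real
  assumes "K > 0" "s > 0"
  shows "(1 - c\<^sup>2 * (1 - s)) / (K * s) = 1 / K + (1 - c\<^sup>2) * (1 - s) / (K * s)"
proof -
  have k: "1 / K = s / (K * s)" using assms by simp
  have "1 / K + (1 - c\<^sup>2) * (1 - s) / (K * s) = (s + (1 - c\<^sup>2) * (1 - s)) / (K * s)"
    unfolding k by (simp add: add_divide_distrib)
  also have "s + (1 - c\<^sup>2) * (1 - s) = 1 - c\<^sup>2 * (1 - s)" by (simp add: algebra_simps)
  finally show ?thesis by simp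
qed

lemma threshold:
  assumes d: "d \<ge> 2" and N: "N \<ge> d" and F: "0 \<le> F'"
  shows "(real d * (cfid N F')\<^sup>2 > 1 \<longleftrightarrow>
           F' > (2 ^ N + sqrt (real d) - 1) / (2 ^ N * sqrt (real d)))"
proof -
  define P where "P = (2::real) ^ N"
  define s where "s = sqrt (real d)"
  have N1: "N \<ge> 1" using d N by simp
  have s0: "s > 0" using d by (simp add: s_def)
  have ss: "s\<^sup>2 = real d" by (simp add: s_def)
  have sd: "s \<le> real d"
  proof -
    have "real d \<le> real d * real d" using d by simp
    then have "sqrt (real d) \<le> sqrt (real d * real d)" by (rule real_sqrt_le_mono)
    then show ?thesis by (simp add: s_def)
  qed
  have dP: "real d + 1 < P"
  proof -
    have "d + 1 < 2 ^ d" using d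
    proof (induction d rule: dec_induct)
      case base then show ?case by simp
    next
      case (step m) then show ?case by simp
    qed
    then have "real (d + 1) < real (2 ^ d)" by (simp only: of_nat_less_iff)
    then have "real d + 1 < 2 ^ d" by simp
    also have "(2::real) ^ d \<le> 2 ^ N" using N by (intro power_increasing) auto
    finally show ?thesis by (simp add: P_def)
  qed
  have sP: "s < P - 1" using sd dP by simp
  have P1: "P - 1 > 0" using sP s0 by simp
  define c where "c = cfid N F'"
  have c: "c = (F' * P - 1) / (P - 1)" using cfid_form[OF N1] by (simp add: c_def P_def)
  have "F' * P \<ge> 0" using F P1 by simp
  then have "c \<ge> - 1 / (P - 1)" unfolding c using P1 divide_right_mono[of "-1" "F' * P - 1" "P - 1"] by simp
  then have "s * (- 1 / (P - 1)) \<le> s * c" using s0 by (intro mult_left_mono) auto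
  moreover have "s * (- 1 / (P - 1)) > -1" using sP P1 by (simp add: field_simps)
  ultimately have sc: "s * c > -1" by linarith
  have "real d * c\<^sup>2 = (s * c)\<^sup>2" by (simp add: power_mult_distrib ss)
  then have "(real d * c\<^sup>2 > 1) \<longleftrightarrow> s * c > 1"
  proof -
    have "((s * c)\<^sup>2 > 1) \<longleftrightarrow> \<bar>s * c\<bar> > 1" using abs_square_le_1[of "s * c"] by linarith
    also have "\<dots> \<longleftrightarrow> s * c > 1" using sc by linarith
    finally show ?thesis using \<open>real d * c\<^sup>2 = (s * c)\<^sup>2\<close> by simp
  qed
  also have "\<dots> \<longleftrightarrow> s * (F' * P - 1) > P - 1"
    unfolding c using P1 by (simp add: field_simps)
  also have "\<dots> \<longleftrightarrow> F' * (P * s) > P + s - 1" by (simp add: algebra_simps)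
  also have "\<dots> \<longleftrightarrow> F' > (P + s - 1) / (P * s)"
    using P1 s0 by (simp add: divide_less_eq)
  finally show ?thesis by (simp add: c_def P_def s_def)
qed



theorem mainTheorem6:
  fixes d n :: nat and F :: real
  assumes "d \<ge> 2" and "n \<ge> 1" and "0 \<le> F" and "F < 1" and "F \<noteq> 1 / 2 ^ (n*d)"
  shows "(\<forall>\<alpha>. denom_deriv d n F \<alpha> \<noteq> 0 \<longleftrightarrow> sin (real (n*d) * \<alpha>) \<noteq> 0)
    \<and> (\<forall>\<alpha>. sin (real (n*d) * \<alpha>) \<noteq> 0 \<longrightarrow>
          Verr d n F \<alpha> = complex_of_real
            ((1 - (cfid (n*d) F)\<^sup>2 * (cos (real (n*d) * \<alpha>))\<^sup>2)
             / (real d * (real n)\<^sup>2 * (cfid (n*d) F)\<^sup>2 * (sin (real (n*d) * \<alpha>))\<^sup>2)))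
    \<and> {\<alpha>. denom_deriv d n F \<alpha> \<noteq> 0 \<and>
          (\<forall>\<beta>. denom_deriv d n F \<beta> \<noteq> 0 \<longrightarrow> Re (Verr d n F \<alpha>) \<le> Re (Verr d n F \<beta>))}
        = {\<alpha>. \<exists>l::int. \<alpha> = (2 * real_of_int l + 1) * pi / (2 * real (n*d))}
    \<and> (\<forall>l::int. Verr d n F ((2 * real_of_int l + 1) * pi / (2 * real (n*d)))
          = complex_of_real (1 / (real d * (cfid (n*d) F)\<^sup>2 * (real n)\<^sup>2)))
    \<and> (\<forall>F'::real. 0 \<le> F' \<and> F' \<le> 1 \<longrightarrow>
          (real d * (cfid (n*d) F')\<^sup>2 > 1 \<longleftrightarrow>
           F' > (2 ^ (n*d) + sqrt (real d) - 1) / (2 ^ (n*d) * sqrt (real d))))"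
proof -
  have n1: "n \<ge> 1" and d1: "d \<ge> 1" using assms by auto
  define N where "N = n * d"
  have Nd: "N \<ge> d" using n1 by (simp add: N_def)
  have N2: "N \<ge> 2" using Nd assms(1) by simp
  have N0: "real N > 0" using N2 by simp
  define c where "c = cfid N F"
  have c0: "c \<noteq> 0" unfolding c_def using cfid_ne0[of N F] N2 assms(5) n1 d1 by (simp add: N_def)
  have c1: "c\<^sup>2 < 1" unfolding c_def using cfid_sq_lt1[OF N2 assms(3,4)] .
  define K where "K = real d * (real n)\<^sup>2 * c\<^sup>2"
  have K0: "K > 0" using c0 n1 d1 by (simp add: K_def)
  define W where "W = (\<lambda>\<alpha>. (1 - c\<^sup>2 * (cos (real N * \<alpha>))\<^sup>2) / (K * (sin (real N * \<alpha>))\<^sup>2))"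
  have VW: "Verr d n F \<alpha> = of_real (W \<alpha>)" for \<alpha>
    using Verr_formula[OF n1 d1, of F \<alpha>] by (simp add: W_def K_def c_def N_def)
  have ReV: "Re (Verr d n F \<alpha>) = W \<alpha>" for \<alpha> by (simp add: VW)
  have P1: "denom_deriv d n F \<alpha> \<noteq> 0 \<longleftrightarrow> sin (real N * \<alpha>) \<noteq> 0" for \<alpha>
  proof -
    have "real n * sqrt (real d) \<noteq> 0" using n1 d1 by simp
    then show ?thesis using denom_formula[OF n1 d1, of F \<alpha>] c0 by (simp add: c_def N_def)
  qed
  have Wge: "W \<alpha> \<ge> 1 / K" and Weq: "W \<alpha> = 1 / K \<Longrightarrow> (sin (real N * \<alpha>))\<^sup>2 = 1"
    if "sin (real N * \<alpha>) \<noteq> 0" for \<alpha>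
  proof -
    define s where "s = (sin (real N * \<alpha>))\<^sup>2"
    have s0: "s > 0" using that by (simp add: s_def)
    have s1: "s \<le> 1" by (simp add: s_def abs_square_le_1)
    have Wd: "W \<alpha> = 1 / K + (1 - c\<^sup>2) * (1 - s) / (K * s)"
      unfolding W_def cos_squared_eq s_def[symmetric] by (rule W_decomp[OF K0 s0])
    have nn: "(1 - c\<^sup>2) * (1 - s) / (K * s) \<ge> 0" using c1 s1 s0 K0 by simp
    then show "W \<alpha> \<ge> 1 / K" using Wd by simp
    assume "W \<alpha> = 1 / K"
    then have "(1 - c\<^sup>2) * (1 - s) / (K * s) = 0" using Wd by simp
    then show "(sin (real N * \<alpha>))\<^sup>2 = 1" using c1 s0 K0 by (simp add: s_def)
  qed
  have Wl: "W ((2 * real_of_int l + 1) * pi / (2 * real N)) = 1 / K"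
    and sl: "sin (real N * ((2 * real_of_int l + 1) * pi / (2 * real N))) \<noteq> 0" for l
  proof -
    have cz: "cos (real N * ((2 * real_of_int l + 1) * pi / (2 * real N))) = 0"
      using cos_odd_zero N0 by simp
    then have sq: "(sin (real N * ((2 * real_of_int l + 1) * pi / (2 * real N))))\<^sup>2 = 1"
      using sin_squared_eq[of "real N * ((2 * real_of_int l + 1) * pi / (2 * real N))"] by simp
    then show "W ((2 * real_of_int l + 1) * pi / (2 * real N)) = 1 / K"
      unfolding W_def using cz K0 by simp
    show "sin (real N * ((2 * real_of_int l + 1) * pi / (2 * real N))) \<noteq> 0"
      using sq by (metis zero_neq_one zero_power2)
  qed
  have P3: "{\<alpha>. denom_deriv d n F \<alpha> \<noteq> 0 \<and>
          (\<forall>\<beta>. denom_deriv d n F \<beta> \<noteq> 0 \<longrightarrow> Re (Verr d n F \<alpha>) \<le> Re (Verr d n F \<beta>))}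
        = {\<alpha>. \<exists>l::int. \<alpha> = (2 * real_of_int l + 1) * pi / (2 * real N)}"
  proof (intro set_eqI iffI; simp only: mem_Collect_eq P1 ReV)
    fix \<alpha> assume a: "sin (real N * \<alpha>) \<noteq> 0 \<and> (\<forall>\<beta>. sin (real N * \<beta>) \<noteq> 0 \<longrightarrow> W \<alpha> \<le> W \<beta>)"
    have "W \<alpha> \<le> W ((2 * real_of_int 0 + 1) * pi / (2 * real N))" using a sl by blast
    then have "W \<alpha> = 1 / K" using Wl Wge a by (metis order.antisym)
    then have "(sin (real N * \<alpha>))\<^sup>2 = 1" using Weq a by blast
    then have "cos (real N * \<alpha>) = 0" using sin_squared_eq[of "real N * \<alpha>"] by simp
    then show "\<exists>l::int. \<alpha> = (2 * real_of_int l + 1) * pi / (2 * real N)"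
      using cos_zero_form N0 by simp
  next
    fix \<alpha> assume "\<exists>l::int. \<alpha> = (2 * real_of_int l + 1) * pi / (2 * real N)"
    then obtain l where l: "\<alpha> = (2 * real_of_int l + 1) * pi / (2 * real N)" by blast
    show "sin (real N * \<alpha>) \<noteq> 0 \<and> (\<forall>\<beta>. sin (real N * \<beta>) \<noteq> 0 \<longrightarrow> W \<alpha> \<le> W \<beta>)"
      using sl Wl Wge unfolding l by auto
  qed
  have P4: "Verr d n F ((2 * real_of_int l + 1) * pi / (2 * real N))
          = complex_of_real (1 / (real d * c\<^sup>2 * (real n)\<^sup>2))" for l
    unfolding VW Wl K_def by (simp add: mult_ac)
  have P5: "(real d * (cfid N F')\<^sup>2 > 1 \<longleftrightarrow>
           F' > (2 ^ N + sqrt (real d) - 1) / (2 ^ N * sqrt (real d)))" if "0 \<le> F'" for F'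
    by (rule threshold[OF assms(1) Nd that])
  show ?thesis
    using P1 VW Verr_formula[OF n1 d1] P3 P4 P5 unfolding N_def c_def by auto
qed

end
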